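(* Let $\rho>0$. A probability measure $\nu$ on $(\mathcal{P}^{loc},\mathcal{F})$ is invariant for the $\mathbb{R}^+$-partitioning process $(\Pi^\rho_t;t\ge0)$ if and only if for every finite subset $z$ of $\mathbb{R}^+$, $\nu\circ\mathrm{Rest}_z^{-1}$ is invariant for $(\mathrm{Rest}_z(\Pi^\rho_t);t\ge0)$.
   Context: $\mathcal{P}^{loc}$ is the set of right-continuous (segments, i.e. maximal connected subsets of blocks, are left-closed right-open intervals) and locally finite (finitely many segments meet any compact set) partitions of $\mathbb{R}^+$; for finite $z$, $\mathrm{Rest}_z(\pi)$ is the partition of $z$ induced by $\pi$; $\mathcal{F}$ is the $\sigma$-field generated by the sets $\{\tilde\pi:\mathrm{Rest}_z(\tilde\pi)=\pi\}$ for finite $z\subset\mathbb{R}^+$ and partitions $\pi$ of $z$. For finite $z=\{z_0<\dots<z_n\}$, the ARG $\Gamma^{\rho,z}$ is the Markov chain on partitions of $z$ in which each pair of blocks merges at rate $1$, and each block $\{z_{i_1}<\dots<z_{i_k}\}$ splits into $\{z_{i_1},\dots,z_{i_j}\}$ and $\{z_{i_{j+1}},\dots,z_{i_k}\}$ at rate $\rho(z_{i_{j+1}}-z_{i_j})$. The $\mathbb{R}^+$-partitioning process $(\Pi^\rho_t)$ is the càdlàg process on $(\mathcal{P}^{loc},\mathcal{F})$ such that for each finite $z$, $(\mathrm{Rest}_z(\Pi^\rho_t))$ is the ARG $\Gamma^{\rho,z}$ started from $\mathrm{Rest}_z(\Pi^\rho_0)$. Invariance of $\nu$ means that if the initial state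 has law $\nu$ then the state at each time $t$ has law $\nu$. *)

theory Defs
  imports "HOL-Probability.Probability" "HOL-Library.Disjoint_Sets"
begin

text \<open>Partitions are represented as sets of blocks (type real set set).
  The half-line R+ is taken to be {0..}.\<close>

definition segment :: "real set set \<Rightarrow> real set \<Rightarrow> bool" where
  "segment \<pi> S \<longleftrightarrow> (\<exists>B\<in>\<pi>. S \<subseteq> B \<and> S \<noteq> {} \<and> connected S \<and>
      (\<forall>T. S \<subseteq> T \<and> T \<subseteq> B \<and> connected T \<longrightarrow> T = S))"

definition Ploc :: "real set set set" where
  "Ploc = {\<pi>. partition_on {0..} \<pi>
     \<and> (\<forall>S. segment \<pi> S \<longrightarrow> (\<exists>a b. S = {a..<b}) \<or> (\<exists>a. S = {a..}))
     \<and> (\<forall>K. compact K \<longrightarrow> finite {S. segment \<pi> S \<and> S \<inter> K \<noteq> {}})}"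

definition Rest :: "real set \<Rightarrow> real set set \<Rightarrow> real set set" where
  "Rest z \<pi> = (\<lambda>B. B \<inter> z) ` \<pi> - {{}}"

definition Parts :: "real set \<Rightarrow> real set set set" where
  "Parts z = {p. partition_on z p}"

definition Ploc_M :: "real set set measure" where
  "Ploc_M = sigma Ploc
     {{p \<in> Ploc. Rest z p = q} | z q. finite z \<and> z \<subseteq> {0..} \<and> partition_on z q}"

text \<open>Transitions of the ancestral recombination graph (ARG).\<close>

definition merge_of :: "real set set \<Rightarrow> real set set \<Rightarrow> bool" where
  "merge_of p q \<longleftrightarrow> (\<exists>A\<in>p. \<exists>B\<in>p. A \<noteq> B \<and> q = insert (A \<union> B) (p - {A, B}))"

definition split_at :: "real set set \<Rightarrow> real set \<Rightarrow> real \<Rightarrow> real \<Rightarrow> real set set \<Rightarrow> bool" where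
  "split_at p C a b q \<longleftrightarrow> C \<in> p \<and> a \<in> C \<and> b \<in> C \<and> a < b \<and> (\<forall>x\<in>C. \<not> (a < x \<and> x < b))
     \<and> q = insert {x\<in>C. x \<le> a} (insert {x\<in>C. b \<le> x} (p - {C}))"

definition ARG_rate :: "real \<Rightarrow> real set set \<Rightarrow> real set set \<Rightarrow> real" where
  "ARG_rate \<rho> p q =
     (if merge_of p q then 1
      else if (\<exists>C a b. split_at p C a b q)
        then \<rho> * (THE d. \<exists>C a b. split_at p C a b q \<and> d = b - a)
      else 0)"

definition ARG_gen :: "real \<Rightarrow> real set \<Rightarrow> real set set \<Rightarrow> real set set \<Rightarrow> real" where
  "ARG_gen \<rho> z p q =
     (if p = q then - (\<Sum>q'\<in>Parts z - {p}. ARG_rate \<rho> p q') else ARG_rate \<rho> p q)"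

fun gen_pow :: "'s set \<Rightarrow> ('s \<Rightarrow> 's \<Rightarrow> real) \<Rightarrow> nat \<Rightarrow> 's \<Rightarrow> 's \<Rightarrow> real" where
  "gen_pow S Q 0 x y = (if x = y then 1 else 0)"
| "gen_pow S Q (Suc n) x y = (\<Sum>w\<in>S. gen_pow S Q n x w * Q w y)"

definition ctmc_trans :: "'s set \<Rightarrow> ('s \<Rightarrow> 's \<Rightarrow> real) \<Rightarrow> real \<Rightarrow> 's \<Rightarrow> 's \<Rightarrow> real" where
  "ctmc_trans S Q t x y = (\<Sum>n. t ^ n / fact n * gen_pow S Q n x y)"

definition ARG_P :: "real \<Rightarrow> real set \<Rightarrow> real \<Rightarrow> real set set \<Rightarrow> real set set \<Rightarrow> real" where
  "ARG_P \<rho> z t = ctmc_trans (Parts z) (ARG_gen \<rho> z) t"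

definition ARG_invariant :: "real \<Rightarrow> real set \<Rightarrow> real set set measure \<Rightarrow> bool" where
  "ARG_invariant \<rho> z \<mu> \<longleftrightarrow>
     (\<forall>t\<ge>0. \<forall>q\<in>Parts z. (\<Sum>p\<in>Parts z. measure \<mu> {p} * ARG_P \<rho> z t p q) = measure \<mu> {q})"

definition is_partitioning_process ::
  "real \<Rightarrow> 'a measure \<Rightarrow> (real \<Rightarrow> 'a \<Rightarrow> real set set) \<Rightarrow> bool" where
  "is_partitioning_process \<rho> M X \<longleftrightarrow>
     prob_space M
   \<and> (\<forall>t\<ge>0. X t \<in> measurable M Ploc_M)
   \<and> (\<forall>\<omega>\<in>space M. \<forall>z. finite z \<and> z \<subseteq> {0..} \<longrightarrow>
        (\<forall>t\<ge>0. \<exists>e>0. \<forall>s. t \<le> s \<and> s < t + e \<longrightarrow> Rest z (X s \<omega>) = Rest z (X t \<omega>))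
      \<and> (\<forall>t>0. \<exists>e>0. \<exists>q. \<forall>s. t - e < s \<and> s < t \<longrightarrow> Rest z (X s \<omega>) = q))
   \<and> (\<forall>z. finite z \<and> z \<subseteq> {0..} \<longrightarrow>
        (\<forall>n (ts :: nat \<Rightarrow> real) (xs :: nat \<Rightarrow> real set set).
           ts 0 = 0 \<and> (\<forall>k<n. ts k \<le> ts (Suc k)) \<and> (\<forall>k\<le>n. xs k \<in> Parts z) \<longrightarrow>
           measure M {\<omega> \<in> space M. \<forall>k\<le>n. Rest z (X (ts k) \<omega>) = xs k}
             = measure M {\<omega> \<in> space M. Rest z (X 0 \<omega>) = xs 0}
               * (\<Prod>k<n. ARG_P \<rho> z (ts (Suc k) - ts k) (xs k) (xs (Suc k)))))"

end

theory Submission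
  imports Defs
begin

lemma Rest_Parts:
  assumes "\<pi> \<in> Ploc" "z \<subseteq> {0..}"
  shows "Rest z \<pi> \<in> Parts z"
proof -
  have "partition_on {0..} \<pi>" using assms(1) by (simp add: Ploc_def)
  from partition_on_restrict[OF this, of z] assms(2)
  have "partition_on z ((\<inter>) z ` \<pi> - {{}})" by (simp add: Int_absorb2)
  moreover have "(\<inter>) z ` \<pi> = (\<lambda>B. B \<inter> z) ` \<pi>" by (auto simp: Int_commute)
  ultimately show ?thesis by (simp add: Rest_def Parts_def)
qed

lemma finite_Parts: "finite z \<Longrightarrow> finite (Parts z)"
  unfolding Parts_def by (rule finitely_many_partition_on)

lemma img_minus_empty: "(\<lambda>C. C \<inter> z) ` (S - {{}}) - {{}} = (\<lambda>C. C \<inter> z) ` S - {{}}"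
  by auto
lemma Rest_Rest: "z1 \<subseteq> z2 \<Longrightarrow> Rest z1 (Rest z2 p) = Rest z1 p"
proof -
  assume a: "z1 \<subseteq> z2"
  have "Rest z1 (Rest z2 p) = (\<lambda>C. C \<inter> z1) ` ((\<lambda>B. B \<inter> z2) ` p) - {{}}"
    unfolding Rest_def by (rule img_minus_empty)
  also have "(\<lambda>C. C \<inter> z1) ` ((\<lambda>B. B \<inter> z2) ` p) = (\<lambda>B. B \<inter> z1) ` p"
    unfolding image_image using a by (intro image_cong) auto
  finally show ?thesis unfolding Rest_def .
qed

definition Gen :: "real set set set set" where
  "Gen = {{p \<in> Ploc. Rest z p = q} | z q. finite z \<and> z \<subseteq> {0..} \<and> partition_on z q}"

definition Cyl :: "real set set set set" where
  "Cyl = {{p \<in> Ploc. Rest z p \<in> A} | z A. finite z \<and> z \<subseteq> {0..}}"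

lemma Gen_Pow: "Gen \<subseteq> Pow Ploc" unfolding Gen_def by auto

lemma space_Ploc_M: "space Ploc_M = Ploc"
  unfolding Ploc_M_def by (simp add: space_measure_of_conv)

lemma sets_Ploc_M: "sets Ploc_M = sigma_sets Ploc Gen"
  unfolding Ploc_M_def using Gen_Pow by (simp add: Gen_def)

lemma cyl_eq:
  assumes "z \<subseteq> {0..}"
  shows "{p \<in> Ploc. Rest z p \<in> A} = (\<Union>q\<in>A \<inter> Parts z. {p \<in> Ploc. Rest z p = q})"
  using Rest_Parts[OF _ assms] by auto

lemma gen_sets:
  assumes "finite z" "z \<subseteq> {0..}"
  shows "{p \<in> Ploc. Rest z p = q} \<in> sets Ploc_M"
proof (cases "q \<in> Parts z")
  case True
  then have "{p \<in> Ploc. Rest z p = q} \<in> Gen" using assms by (auto simp: Gen_def Parts_def)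
  then show ?thesis unfolding sets_Ploc_M by auto
next
  case False
  then have "{p \<in> Ploc. Rest z p = q} = {}" using Rest_Parts assms by auto
  then show ?thesis by (metis sets.empty_sets)
qed

lemma cyl_sets:
  assumes "finite z" "z \<subseteq> {0..}"
  shows "{p \<in> Ploc. Rest z p \<in> A} \<in> sets Ploc_M"
  unfolding cyl_eq[OF assms(2)]
  using assms finite_Parts[OF assms(1)] gen_sets
  by (intro sets.finite_UN) auto

lemma Rest_meas:
  assumes "finite z" "z \<subseteq> {0..}"
  shows "Rest z \<in> measurable Ploc_M (count_space (Parts z))"
proof (rule measurableI)
  fix x assume "x \<in> space Ploc_M"
  then show "Rest z x \<in> space (count_space (Parts z))"
    using Rest_Parts assms by (auto simp: space_Ploc_M)
next
  fix A assume "A \<in> sets (count_space (Parts z))"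
  have "Rest z -` A \<inter> space Ploc_M = {p \<in> Ploc. Rest z p \<in> A}"
    by (auto simp: space_Ploc_M)
  then show "Rest z -` A \<inter> space Ploc_M \<in> sets Ploc_M" using cyl_sets assms by simp
qed

lemma Int_stable_Cyl: "Int_stable Cyl"
proof (rule Int_stableI)
  fix a b assume "a \<in> Cyl" "b \<in> Cyl"
  then obtain z1 A1 z2 A2 where a: "a = {p \<in> Ploc. Rest z1 p \<in> A1}" "finite z1" "z1 \<subseteq> {0..}"
    and b: "b = {p \<in> Ploc. Rest z2 p \<in> A2}" "finite z2" "z2 \<subseteq> {0..}"
    unfolding Cyl_def by blast
  have "a \<inter> b = {p \<in> Ploc. Rest (z1 \<union> z2) p \<in> {q. Rest z1 q \<in> A1 \<and> Rest z2 q \<in> A2}}"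
    using a b by (auto simp: Rest_Rest)
  then show "a \<inter> b \<in> Cyl" using a b unfolding Cyl_def by blast
qed

lemma sigma_Cyl: "sigma_sets Ploc Cyl = sigma_sets Ploc Gen"
proof (rule sigma_sets_eqI)
  fix a assume "a \<in> Cyl"
  then show "a \<in> sigma_sets Ploc Gen"
    using cyl_sets unfolding Cyl_def sets_Ploc_M[symmetric] by blast
next
  fix b assume "b \<in> Gen"
  then obtain z q where "b = {p \<in> Ploc. Rest z p = q}" "finite z" "z \<subseteq> {0..}"
    unfolding Gen_def by blast
  then have "b = {p \<in> Ploc. Rest z p \<in> {q}}" "finite z" "z \<subseteq> {0..}" by auto
  then have "b \<in> Cyl" unfolding Cyl_def by blast
  then show "b \<in> sigma_sets Ploc Cyl" by auto
qed

lemma Ploc_M_eqI: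
  assumes "finite_measure N1" "finite_measure N2"
    and "sets N1 = sets Ploc_M" "sets N2 = sets Ploc_M"
    and eq: "\<And>z q. finite z \<Longrightarrow> z \<subseteq> {0..} \<Longrightarrow> q \<in> Parts z \<Longrightarrow>
       measure N1 {p \<in> Ploc. Rest z p = q} = measure N2 {p \<in> Ploc. Rest z p = q}"
  shows "N1 = N2"
proof (rule measure_eqI_generator_eq_countable[where E = Cyl and \<Omega> = Ploc and A = "{Ploc}"])
  show "Int_stable Cyl" by (rule Int_stable_Cyl)
  show "Cyl \<subseteq> Pow Ploc" unfolding Cyl_def by auto
  show "sets N1 = sigma_sets Ploc Cyl" "sets N2 = sigma_sets Ploc Cyl"
    using assms(3,4) by (simp_all add: sets_Ploc_M sigma_Cyl)
  have "Ploc = {p \<in> Ploc. Rest {} p \<in> UNIV}" by auto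
  then show "{Ploc} \<subseteq> Cyl" unfolding Cyl_def by blast
  show "\<Union> {Ploc} = Ploc" "countable {Ploc}" by auto
  show "\<And>a. a \<in> {Ploc} \<Longrightarrow> emeasure N1 a \<noteq> \<infinity>"
    using finite_measure.emeasure_finite[OF assms(1)] by auto
  fix X assume "X \<in> Cyl"
  then obtain z A where X: "X = {p \<in> Ploc. Rest z p \<in> A}" "finite z" "z \<subseteq> {0..}"
    unfolding Cyl_def by blast
  have fin: "finite (A \<inter> Parts z)" using finite_Parts[OF X(2)] by auto
  have disj: "disjoint_family_on (\<lambda>q. {p \<in> Ploc. Rest z p = q}) (A \<inter> Parts z)"
    by (auto simp: disjoint_family_on_def)
  have s1: "(\<lambda>q. {p \<in> Ploc. Rest z p = q}) ` (A \<inter> Parts z) \<subseteq> sets N1"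
    using gen_sets X assms(3) by auto
  have s2: "(\<lambda>q. {p \<in> Ploc. Rest z p = q}) ` (A \<inter> Parts z) \<subseteq> sets N2"
    using gen_sets X assms(4) by auto
  have "measure N1 X = (\<Sum>q\<in>A \<inter> Parts z. measure N1 {p \<in> Ploc. Rest z p = q})"
    unfolding X(1) cyl_eq[OF X(3)]
    by (rule finite_measure.finite_measure_finite_Union[OF assms(1) fin s1 disj])
  also have "\<dots> = (\<Sum>q\<in>A \<inter> Parts z. measure N2 {p \<in> Ploc. Rest z p = q})"
    using eq X by auto
  also have "\<dots> = measure N2 X"
    unfolding X(1) cyl_eq[OF X(3)]
    by (rule finite_measure.finite_measure_finite_Union[OF assms(2) fin s2 disj, symmetric])
  finally have "measure N1 X = measure N2 X" .
  then show "emeasure N1 X = emeasure N2 X"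
    using assms(1,2) by (simp add: finite_measure.emeasure_eq_measure)
qed


lemma all_le_1: "(\<forall>k\<le>(1::nat). P k) \<longleftrightarrow> P 0 \<and> P 1"
  using le_Suc_eq by auto

lemma all_le_Suc0: "(\<forall>k\<le>Suc 0. P k) \<longleftrightarrow> P 0 \<and> P (Suc 0)"
  using le_Suc_eq by auto

theorem lemma1:
  fixes \<rho> :: real and \<nu> :: "real set set measure"
    and M :: "'a measure" and X :: "real \<Rightarrow> 'a \<Rightarrow> real set set"
  assumes "\<rho> > 0"
    and "prob_space \<nu>" and "sets \<nu> = sets Ploc_M"
    and "is_partitioning_process \<rho> M X"
    and "distr M Ploc_M (X 0) = \<nu>"
  shows "(\<forall>t\<ge>0. distr M Ploc_M (X t) = \<nu>) \<longleftrightarrow>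
         (\<forall>z. finite z \<and> z \<subseteq> {0..} \<longrightarrow>
              ARG_invariant \<rho> z (distr \<nu> (count_space (Parts z)) (Rest z)))"
proof -
  note proc = assms(4)[unfolded is_partitioning_process_def]
  have PS: "prob_space M" using proc by (rule conjunct1)
  note meas0 = proc[THEN conjunct2, THEN conjunct1]
  have meas: "\<And>t. t \<ge> 0 \<Longrightarrow> X t \<in> measurable M Ploc_M" using meas0 by simp
  note fdd0 = proc[THEN conjunct2, THEN conjunct2, THEN conjunct2]
  have fdd: "measure M {\<omega> \<in> space M. \<forall>k\<le>n. Rest z (X (ts k) \<omega>) = xs k}
             = measure M {\<omega> \<in> space M. Rest z (X 0 \<omega>) = xs 0}
               * (\<Prod>k<n. ARG_P \<rho> z (ts (Suc k) - ts k) (xs k) (xs (Suc k)))"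
    if a: "finite z" and b: "z \<subseteq> {0..}" and
      c: "ts 0 = 0 \<and> (\<forall>k<n. ts k \<le> ts (Suc k)) \<and> (\<forall>k\<le>n. xs k \<in> Parts z)"
    for z n ts xs
    using fdd0[rule_format, OF conjI[OF a b] c] .
  define m where "m t z q = measure M {\<omega> \<in> space M. Rest z (X t \<omega>) = q}" for t z q
  have inP: "\<And>t \<omega>. t \<ge> 0 \<Longrightarrow> \<omega> \<in> space M \<Longrightarrow> X t \<omega> \<in> Ploc"
    using meas measurable_space space_Ploc_M by metis
  have pre: "\<And>t z q. t \<ge> 0 \<Longrightarrow> X t -` {p \<in> Ploc. Rest z p = q} \<inter> space M
        = {\<omega> \<in> space M. Rest z (X t \<omega>) = q}"
    using inP by auto
  have ev_sets: "{\<omega> \<in> space M. Rest z (X t \<omega>) = q} \<in> sets M"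
    if t: "t \<ge> 0" and z: "finite z" "z \<subseteq> {0..}" for t z q
    using measurable_sets[OF meas[OF t] gen_sets[OF z, of q]] unfolding pre[OF t] .
  have distr_gen: "measure (distr M Ploc_M (X t)) {p \<in> Ploc. Rest z p = q} = m t z q"
    if t: "t \<ge> 0" and z: "finite z" "z \<subseteq> {0..}" for t z q
    using measure_distr[OF meas[OF t] gen_sets[OF z, of q]] unfolding pre[OF t] m_def .
  have chap: "m t z q = (\<Sum>p\<in>Parts z. m 0 z p * ARG_P \<rho> z t p q)"
    if t: "t \<ge> 0" and z: "finite z" "z \<subseteq> {0..}" and q: "q \<in> Parts z" for t z q
  proof -
    define A where "A p = {\<omega> \<in> space M. Rest z (X 0 \<omega>) = p \<and> Rest z (X t \<omega>) = q}" for p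
    have Ap: "measure M (A p) = m 0 z p * ARG_P \<rho> z t p q" if p: "p \<in> Parts z" for p
    proof -
      let ?ts = "\<lambda>k::nat. if k = 0 then 0 else t"
      let ?xs = "\<lambda>k::nat. if k = 0 then p else q"
      have "measure M {\<omega> \<in> space M. \<forall>k\<le>1. Rest z (X (?ts k) \<omega>) = ?xs k}
             = measure M {\<omega> \<in> space M. Rest z (X 0 \<omega>) = ?xs 0}
               * (\<Prod>k<1. ARG_P \<rho> z (?ts (Suc k) - ?ts k) (?xs k) (?xs (Suc k)))"
        using fdd[OF z, of ?ts 1 ?xs] t p q by (auto simp: all_le_1)
      then show ?thesis unfolding A_def m_def by (simp add: all_le_1 all_le_Suc0)
    qed
    have U: "{\<omega> \<in> space M. Rest z (X t \<omega>) = q} = (\<Union>p\<in>Parts z. A p)"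
      unfolding A_def using Rest_Parts[OF inP[of 0] z(2)] by auto
    have AS: "A ` Parts z \<subseteq> sets M"
    proof
      fix x assume "x \<in> A ` Parts z"
      then obtain p where "x = A p" by blast
      then have "x = {\<omega> \<in> space M. Rest z (X 0 \<omega>) = p} \<inter> {\<omega> \<in> space M. Rest z (X t \<omega>) = q}"
        unfolding A_def by auto
      then show "x \<in> sets M" using ev_sets[OF _ z] t by auto
    qed
    have D: "disjoint_family_on A (Parts z)"
      unfolding disjoint_family_on_def A_def by auto
    have "m t z q = measure M (\<Union>p\<in>Parts z. A p)" unfolding m_def U ..
    also have "\<dots> = (\<Sum>p\<in>Parts z. measure M (A p))"
      using PS finite_Parts[OF z(1)] AS D
      by (intro finite_measure.finite_measure_finite_Union) (auto simp: prob_space_def)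
    also have "\<dots> = (\<Sum>p\<in>Parts z. m 0 z p * ARG_P \<rho> z t p q)"
      using Ap by simp
    finally show ?thesis .
  qed
  have space_nu: "space \<nu> = Ploc"
    using sets_eq_imp_space_eq[OF assms(3)] space_Ploc_M by simp
  have muq: "measure (distr \<nu> (count_space (Parts z)) (Rest z)) {q} = m 0 z q"
    if z: "finite z" "z \<subseteq> {0..}" and q: "q \<in> Parts z" for z q
  proof -
    have RM: "Rest z \<in> measurable \<nu> (count_space (Parts z))"
      by (subst measurable_cong_sets[OF assms(3) refl]) (rule Rest_meas[OF z])
    have "measure (distr \<nu> (count_space (Parts z)) (Rest z)) {q}
        = measure \<nu> (Rest z -` {q} \<inter> space \<nu>)"
      using q by (intro measure_distr[OF RM]) auto
    also have "Rest z -` {q} \<inter> space \<nu> = {p \<in> Ploc. Rest z p = q}"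
      using space_nu by auto
    also have "measure \<nu> {p \<in> Ploc. Rest z p = q} = m 0 z q"
      using distr_gen[OF order_refl z] assms(5) by simp
    finally show ?thesis .
  qed
  show ?thesis
  proof
    assume H: "\<forall>t\<ge>0. distr M Ploc_M (X t) = \<nu>"
    show "\<forall>z. finite z \<and> z \<subseteq> {0..} \<longrightarrow>
              ARG_invariant \<rho> z (distr \<nu> (count_space (Parts z)) (Rest z))"
    proof (intro allI impI)
      fix z :: "real set" assume z: "finite z \<and> z \<subseteq> {0..}"
      show "ARG_invariant \<rho> z (distr \<nu> (count_space (Parts z)) (Rest z))"
        unfolding ARG_invariant_def
      proof (intro allI impI ballI)
        fix t q assume t: "(t::real) \<ge> 0" and q: "q \<in> Parts z"
        have "(\<Sum>p\<in>Parts z. measure (distr \<nu> (count_space (Parts z)) (Rest z)) {p} * ARG_P \<rho> z t p q)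
            = (\<Sum>p\<in>Parts z. m 0 z p * ARG_P \<rho> z t p q)"
          using muq z by simp
        also have "\<dots> = m t z q" using chap t z q by simp
        also have "\<dots> = measure (distr M Ploc_M (X t)) {p \<in> Ploc. Rest z p = q}"
          using distr_gen t z by simp
        also have "\<dots> = measure (distr M Ploc_M (X 0)) {p \<in> Ploc. Rest z p = q}"
          using H t assms(5) by simp
        also have "\<dots> = m 0 z q" using distr_gen z by simp
        also have "\<dots> = measure (distr \<nu> (count_space (Parts z)) (Rest z)) {q}"
          using muq z q by simp
        finally show "(\<Sum>p\<in>Parts z. measure (distr \<nu> (count_space (Parts z)) (Rest z)) {p} * ARG_P \<rho> z t p q)
            = measure (distr \<nu> (count_space (Parts z)) (Rest z)) {q}" .
      qed
    qed
  next
    assume H: "\<forall>z. finite z \<and> z \<subseteq> {0..} \<longrightarrow>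
              ARG_invariant \<rho> z (distr \<nu> (count_space (Parts z)) (Rest z))"
    show "\<forall>t\<ge>0. distr M Ploc_M (X t) = \<nu>"
    proof (intro allI impI)
      fix t :: real assume t: "t \<ge> 0"
      have fm: "finite_measure (distr M Ploc_M (X t))"
        using prob_space.prob_space_distr[OF PS meas[OF t]] by (simp add: prob_space_def)
      have fn: "finite_measure \<nu>" using assms(2) by (simp add: prob_space_def)
      show "distr M Ploc_M (X t) = \<nu>"
      proof (rule Ploc_M_eqI[OF fm fn _ assms(3)])
        show "sets (distr M Ploc_M (X t)) = sets Ploc_M" by simp
        fix z q assume z: "finite z" "z \<subseteq> {0..}" and q: "q \<in> Parts z"
        have inv: "ARG_invariant \<rho> z (distr \<nu> (count_space (Parts z)) (Rest z))"
          using H z by blast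
        have "measure (distr M Ploc_M (X t)) {p \<in> Ploc. Rest z p = q} = m t z q"
          using distr_gen t z by simp
        also have "\<dots> = (\<Sum>p\<in>Parts z. m 0 z p * ARG_P \<rho> z t p q)" using chap t z q by simp
        also have "\<dots> = (\<Sum>p\<in>Parts z. measure (distr \<nu> (count_space (Parts z)) (Rest z)) {p} * ARG_P \<rho> z t p q)"
          using muq z by simp
        also have "\<dots> = measure (distr \<nu> (count_space (Parts z)) (Rest z)) {q}"
          using inv t q unfolding ARG_invariant_def by blast
        also have "\<dots> = m 0 z q" using muq z q by simp
        also have "\<dots> = measure \<nu> {p \<in> Ploc. Rest z p = q}"
          using distr_gen[OF order_refl z] assms(5) by simp
        finally show "measure (distr M Ploc_M (X t)) {p \<in> Ploc. Rest z p = q} = measure \<nu> {p \<in> Ploc. Rest z p = q}" .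
      qed
    qed
  qed
qed

end
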